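(* Let $K$ be a field of characteristic $0$, $t$ a variable, $\theta=t\frac{d}{dt}$, $g':=\theta g$, and let $\mathcal{L}=\theta^n+\sum_{i=0}^{n-1}a_i\theta^i$ with $a_i\in K(t)$, $n\geq1$. Let $\beta$ be a $\beta$-factor of $\mathcal{L}$ (a non-zero solution, in some differential field extension, of $n\beta'=2a_{n-1}\beta$). Then $\mathcal{L}$ is self-adjoint and $\beta$ can be chosen in $K(t)$ if and only if the differential module $\mathcal{M}_{\mathcal{L}}$ is polarizable.
   Context: The formal adjoint of $\mathcal{L}$ is $\mathcal{L}^*=(-1)^n\theta^n+\sum_{i=0}^{n-1}(-1)^i\theta^i a_i$ (here $\theta^i a_i$ is a composition of operators). $\mathcal{L}$ is called self-adjoint if $\mathcal{L}^*=(-1)^n\beta\mathcal{L}\beta^{-1}$ as operators. $\mathcal{M}_{\mathcal{L}}:=K(t)[\theta]/K(t)[\theta]\mathcal{L}$ is the left $K(t)[\theta]$-module with generator $\eta$ = image of $1$; it is free over $K(t)$ with basis $\eta^{(i)}:=\theta^i\eta$, $0\le i\le n-1$. $\operatorname{Fil}^i\subset\mathcal{M}_{\mathcal{L}}$ is the $K(t)$-span of $\eta^{(j)}$, $0\le j\le n-1-i$. A pairing $\langle\,,\rangle:\mathcal{M}_{\mathcal{L}}\times\mathcal{M}_{\mathcal{L}}\to K(t)$ is horizontal if $\theta\langle x,y\rangle=\langle\theta x,y\rangle+\langle x,\theta y\rangle$. A polarization is a $K(t)$-bilinear, $(-1)^{n+1}$-symmetric, non-degenerate horizontal pairing with $\langle\operatorname{Fil}^i,\operatorname{Fil}^{n-i}\rangle=0$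 for $0\le i\le n-1$; $\mathcal{M}_{\mathcal{L}}$ is polarizable if one exists. *)

theory Defs
  imports "HOL-Computational_Algebra.Computational_Algebra"
begin

text \<open>The rational function field K(t) is modelled as the fraction field
  of K[t], type 'k poly fract.  theta = t d/dt.\<close>

definition theta_poly :: "'k::field_char_0 poly \<Rightarrow> 'k poly" where
  "theta_poly p = [:0, 1:] * pderiv p"

text \<open>theta on K(t): theta(p/q) = (theta p * q - p * theta q) / q^2
  (independent of the representative p/q, q nonzero).\<close>
definition theta :: "'k::field_char_0 poly fract \<Rightarrow> 'k poly fract" where
  "theta x = (THE y. \<exists>p q. q \<noteq> 0 \<and> x = Fract p q \<and>
      y = Fract (theta_poly p * q - p * theta_poly q) (q * q))"

text \<open>Differential operators in K(t)[theta]: the operator sum c_i theta^i is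
  represented by the polynomial with coefficients c_i (only as coefficient
  container; multiplication is the twisted one below).\<close>
type_synonym 'k diffop = "'k poly fract poly"

text \<open>Left multiplication by theta: theta * (sum c_j theta^j) = sum (theta c_j) theta^j + c_j theta^(j+1).\<close>
definition theta_op :: "'k::field_char_0 diffop \<Rightarrow> 'k diffop" where
  "theta_op Q = (\<Sum>j\<le>degree Q. monom (theta (coeff Q j)) j) + pCons 0 Q"

definition op_mult :: "'k::field_char_0 diffop \<Rightarrow> 'k diffop \<Rightarrow> 'k diffop" where
  "op_mult P Q = (\<Sum>i\<le>degree P. smult (coeff P i) ((theta_op ^^ i) Q))"

definition adjoint :: "'k::field_char_0 diffop \<Rightarrow> 'k diffop" where
  "adjoint L = (\<Sum>i\<le>degree L. smult ((-1) ^ i) (op_mult (monom 1 i) [:coeff L i:]))"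

definition self_adjoint_wrt :: "'k::field_char_0 diffop \<Rightarrow> 'k poly fract \<Rightarrow> bool" where
  "self_adjoint_wrt L \<beta> \<longleftrightarrow>
     adjoint L = smult ((-1) ^ degree L) (op_mult [:\<beta>:] (op_mult L [:inverse \<beta>:]))"

definition beta_factor :: "'k::field_char_0 diffop \<Rightarrow> 'k poly fract \<Rightarrow> bool" where
  "beta_factor L \<beta> \<longleftrightarrow> \<beta> \<noteq> 0 \<and>
     of_nat (degree L) * theta \<beta> = 2 * coeff L (degree L - 1) * \<beta>"

text \<open>The module M_L = K(t)[theta] / K(t)[theta] L: elements are classes of
  operators modulo the left ideal generated by L.\<close>
definition in_left_ideal :: "'k::field_char_0 diffop \<Rightarrow> 'k diffop \<Rightarrow> bool" where
  "in_left_ideal L P \<longleftrightarrow> (\<exists>Q. P = op_mult Q L)"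

definition mcong :: "'k::field_char_0 diffop \<Rightarrow> 'k diffop \<Rightarrow> 'k diffop \<Rightarrow> bool" where
  "mcong L P P' \<longleftrightarrow> in_left_ideal L (P - P')"

text \<open>Fil^i: class has a representative in the K(t)-span of theta^j eta, j \<le> n-1-i.\<close>
definition in_Fil :: "'k::field_char_0 diffop \<Rightarrow> nat \<Rightarrow> 'k diffop \<Rightarrow> bool" where
  "in_Fil L i P \<longleftrightarrow> (\<exists>P'. mcong L P P' \<and> (\<forall>j. degree L - i \<le> j \<longrightarrow> coeff P' j = 0))"

text \<open>A pairing on M_L is given by a function on representatives which is
  well defined on classes.\<close>
definition polarization :: "'k::field_char_0 diffop \<Rightarrow> ('k diffop \<Rightarrow> 'k diffop \<Rightarrow> 'k poly fract) \<Rightarrow> bool" where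
  "polarization L B \<longleftrightarrow>
     (\<forall>P P' Q. mcong L P P' \<longrightarrow> B P Q = B P' Q \<and> B Q P = B Q P') \<and>
     (\<forall>a P P' Q. B (smult a P + P') Q = a * B P Q + B P' Q \<and>
                 B Q (smult a P + P') = a * B Q P + B Q P') \<and>
     (\<forall>P Q. B Q P = (-1) ^ (degree L + 1) * B P Q) \<and>
     (\<forall>P. (\<forall>Q. B P Q = 0) \<longrightarrow> in_left_ideal L P) \<and>
     (\<forall>P Q. theta (B P Q) = B (theta_op P) Q + B P (theta_op Q)) \<and>
     (\<forall>i < degree L. \<forall>P Q. in_Fil L i P \<longrightarrow> in_Fil L (degree L - i) Q \<longrightarrow> B P Q = 0)"

definition polarizable :: "'k::field_char_0 diffop \<Rightarrow> bool" where
  "polarizable L \<longleftrightarrow> (\<exists>B. polarization L B)"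

end

theory Submission
  imports Defs "HOL-Library.Function_Algebras"
begin


lemma theta_poly_add: "theta_poly (p + q) = theta_poly p + theta_poly q"
  by (simp add: theta_poly_def pderiv_add algebra_simps)
lemma theta_poly_mult: "theta_poly (p * q) = theta_poly p * q + p * theta_poly q"
  by (simp add: theta_poly_def pderiv_mult algebra_simps)
lemma theta_poly_minus: "theta_poly (- p) = - theta_poly p"
  by (simp add: theta_poly_def pderiv_minus)
lemma theta_poly_1: "theta_poly 1 = 0"
  by (simp add: theta_poly_def)

lemma theta_Fract:
  assumes q: "q \<noteq> 0"
  shows "theta (Fract p q) = Fract (theta_poly p * q - p * theta_poly q) (q * q)"
  unfolding theta_def
proof (rule the_equality)
  show "\<exists>p' q'. q' \<noteq> 0 \<and> Fract p q = Fract p' q' \<and>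
      Fract (theta_poly p * q - p * theta_poly q) (q * q) = Fract (theta_poly p' * q' - p' * theta_poly q') (q' * q')"
    using q by blast
next
  fix y assume "\<exists>p' q'. q' \<noteq> 0 \<and> Fract p q = Fract p' q' \<and>
      y = Fract (theta_poly p' * q' - p' * theta_poly q') (q' * q')"
  then obtain p' q' where q': "q' \<noteq> 0" and e: "Fract p q = Fract p' q'"
    and y: "y = Fract (theta_poly p' * q' - p' * theta_poly q') (q' * q')" by blast
  have e1: "p * q' = p' * q" using e q q' by (simp add: eq_fract)
  have e2: "theta_poly p * q' + p * theta_poly q' = theta_poly p' * q + p' * theta_poly q"
    using arg_cong[OF e1, of theta_poly] by (simp add: theta_poly_mult)
  have "(theta_poly p' * q' - p' * theta_poly q') * (q * q) = (theta_poly p * q - p * theta_poly q) * (q' * q')"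
  proof -
    have "(theta_poly p * q - p * theta_poly q) * (q' * q') - (theta_poly p' * q' - p' * theta_poly q') * (q * q)
       = q * q' * (theta_poly p * q' + p * theta_poly q' - (theta_poly p' * q + p' * theta_poly q))
         - (theta_poly q * q' + theta_poly q' * q) * (p * q' - p' * q)"
      by (simp add: algebra_simps)
    also have "\<dots> = 0" using e1 e2 by simp
    finally show ?thesis by simp
  qed
  then show "y = Fract (theta_poly p * q - p * theta_poly q) (q * q)"
    using q q' y by (simp add: eq_fract)
qed

lemma theta_add: "theta (x + y) = theta x + theta y"
proof (cases x; cases y)
  fix a b c d assume x: "x = Fract a b" "b \<noteq> 0" and y: "y = Fract c d" "d \<noteq> 0"
  show ?thesis using x y
    by (simp add: theta_Fract theta_poly_add theta_poly_mult eq_fract algebra_simps)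
qed

lemma theta_mult: "theta (x * y) = theta x * y + x * theta y"
proof (cases x; cases y)
  fix a b c d assume x: "x = Fract a b" "b \<noteq> 0" and y: "y = Fract c d" "d \<noteq> 0"
  show ?thesis using x y
    by (simp add: theta_Fract theta_poly_add theta_poly_mult eq_fract algebra_simps)
qed

lemma theta_0[simp]: "theta 0 = 0"
proof -
  have "theta 0 + theta 0 = theta 0 + 0" using theta_add[of 0 0] by simp
  then show ?thesis by (rule add_left_imp_eq)
qed
lemma theta_1[simp]: "theta 1 = 0"
proof -
  have "theta 1 + theta 1 = theta 1 + 0" using theta_mult[of 1 1] by simp
  then show ?thesis by (rule add_left_imp_eq)
qed
lemma theta_minus: "theta (- x) = - theta x"
  using theta_add[of x "-x"] by (simp add: eq_neg_iff_add_eq_0 add.commute)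
lemma theta_diff: "theta (x - y) = theta x - theta y"
  using theta_add[of x "-y"] by (simp add: theta_minus)
lemma theta_neg1_pow[simp]: "theta ((-1) ^ i) = 0"
  by (induction i) (simp_all add: theta_mult theta_minus)
lemma theta_sum: "theta (sum f A) = (\<Sum>i\<in>A. theta (f i))"
  by (induction A rule: infinite_finite_induct) (simp_all add: theta_add)




lemma coeff_theta_op:
  "coeff (theta_op Q) j = theta (coeff Q j) + (if j = 0 then 0 else coeff Q (j - 1))"
proof -
  have "coeff (\<Sum>k\<le>degree Q. monom (theta (coeff Q k)) k) j = theta (coeff Q j)"
  proof (cases "j \<le> degree Q")
    case True then show ?thesis by (simp add: coeff_sum coeff_monom)
  next
    case False then show ?thesis by (simp add: coeff_sum coeff_monom coeff_eq_0)
  qed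
  then show ?thesis unfolding theta_op_def by (simp add: coeff_pCons split: nat.split)
qed

lemma theta_op_add: "theta_op (P + Q) = theta_op P + theta_op Q"
  by (rule poly_eqI) (simp add: coeff_theta_op theta_add)
lemma theta_op_smult: "theta_op (smult a Q) = smult (theta a) Q + smult a (theta_op Q)"
  by (rule poly_eqI) (simp add: coeff_theta_op theta_mult algebra_simps)

locale dmod =
  fixes sc :: "'k::field_char_0 poly fract \<Rightarrow> 'm::ab_group_add \<Rightarrow> 'm" and T :: "'m \<Rightarrow> 'm"
  assumes sc_add_left: "sc (a + b) x = sc a x + sc b x"
    and sc_add_right: "sc a (x + y) = sc a x + sc a y"
    and sc_mult: "sc (a * b) x = sc a (sc b x)"
    and sc_one: "sc 1 x = x"
    and T_add: "T (x + y) = T x + T y"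
    and T_sc: "T (sc a x) = sc (theta a) x + sc a (T x)"
begin

lemma sc_zero_left[simp]: "sc 0 x = 0"
  using sc_add_left[of 0 0 x] by simp
lemma sc_zero_right[simp]: "sc a 0 = 0"
  using sc_add_right[of a 0 0] by simp
lemma T_zero[simp]: "T 0 = 0"
  using T_add[of 0 0] by simp
lemma T_minus: "T (- x) = - T x"
  using T_add[of x "-x"] by (simp add: eq_neg_iff_add_eq_0 add.commute)
lemma T_diff: "T (x - y) = T x - T y"
  using T_add[of x "-y"] by (simp add: T_minus)
lemma sc_minus_right: "sc a (- x) = - sc a x"
  using sc_add_right[of a x "-x"] by (simp add: eq_neg_iff_add_eq_0 add.commute)
lemma sc_minus_left: "sc (- a) x = - sc a x"
  using sc_add_left[of a "-a" x] by (simp add: eq_neg_iff_add_eq_0 add.commute)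
lemma sc_diff_right: "sc a (x - y) = sc a x - sc a y"
  using sc_add_right[of a x "-y"] by (simp add: sc_minus_right)
lemma Tpow_zero[simp]: "(T ^^ i) 0 = 0"
  by (induction i) auto
lemma Tpow_add: "(T ^^ i) (x + y) = (T ^^ i) x + (T ^^ i) y"
  by (induction i) (auto simp: T_add)
lemma sc_sum_right: "sc a (sum f A) = (\<Sum>i\<in>A. sc a (f i))"
  by (induction A rule: infinite_finite_induct) (simp_all add: sc_add_right)
lemma T_sum: "T (sum f A) = (\<Sum>i\<in>A. T (f i))"
  by (induction A rule: infinite_finite_induct) (simp_all add: T_add)

definition act :: "'k diffop \<Rightarrow> 'm \<Rightarrow> 'm" where
  "act P x = (\<Sum>i\<le>degree P. sc (coeff P i) ((T ^^ i) x))"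

lemma act_bound: assumes "degree P \<le> N"
  shows "act P x = (\<Sum>i\<le>N. sc (coeff P i) ((T ^^ i) x))"
proof -
  have "(\<Sum>i\<le>N. sc (coeff P i) ((T ^^ i) x)) = (\<Sum>i\<le>degree P. sc (coeff P i) ((T ^^ i) x))"
    using assms by (intro sum.mono_neutral_right) (auto simp: coeff_eq_0)
  then show ?thesis by (simp add: act_def)
qed

lemma act_add: "act (P + Q) x = act P x + act Q x"
proof -
  let ?N = "max (degree P) (degree Q)"
  have "degree (P + Q) \<le> ?N" by (rule degree_add_le) auto
  then show ?thesis
    by (simp add: act_bound[of _ ?N] sc_add_left sum.distrib)
qed

lemma act_zero[simp]: "act 0 x = 0"
  by (simp add: act_def)

lemma act_smult: "act (smult a P) x = sc a (act P x)"
  using act_bound[of "smult a P" "degree P"]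
  by (simp add: act_def sc_mult sc_sum_right)

lemma act_minus: "act (- P) x = - act P x"
  using act_smult[of "-1" P x] by (simp add: sc_minus_left sc_one)

lemma act_diff: "act (P - Q) x = act P x - act Q x"
  using act_add[of P "-Q" x] by (simp add: act_minus)

lemma act_sum: "act (sum f A) x = (\<Sum>i\<in>A. act (f i) x)"
  by (induction A rule: infinite_finite_induct) (simp_all add: act_add)

lemma act_add_right: "act P (x + y) = act P x + act P y"
  by (simp add: act_def Tpow_add sc_add_right sum.distrib)

lemma act_zero_right[simp]: "act P 0 = 0"
  by (simp add: act_def)

lemma act_monom: "act (monom a k) x = sc a ((T ^^ k) x)"
proof -
  have "act (monom a k) x = (\<Sum>i\<le>k. sc (coeff (monom a k) i) ((T ^^ i) x))"
    by (rule act_bound) (simp add: degree_monom_le)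
  also have "\<dots> = (\<Sum>i\<le>k. if i = k then sc a ((T ^^ i) x) else 0)"
    by (rule sum.cong) (auto simp: coeff_monom)
  finally show ?thesis by simp
qed

lemma act_const: "act [:a:] x = sc a x"
  using act_monom[of a 0 x] by (simp add: monom_0)

lemma act_one: "act 1 x = x"
  using act_const[of 1 x] by (simp add: sc_one one_pCons)

lemma act_pCons0: "act (pCons 0 P) x = act P (T x)"
proof -
  have "act (pCons 0 P) x = (\<Sum>i\<le>Suc (degree P). sc (coeff (pCons 0 P) i) ((T ^^ i) x))"
    by (rule act_bound) (simp add: degree_pCons_le)
  also have "\<dots> = (\<Sum>i\<le>degree P. sc (coeff P i) ((T ^^ Suc i) x))"
    by (subst sum.atMost_Suc_shift) simp
  also have "\<dots> = act P (T x)" by (simp add: act_def funpow_swap1)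
  finally show ?thesis .
qed

lemma act_theta_op: "act (theta_op P) x = T (act P x)"
proof -
  have "act (theta_op P) x = (\<Sum>j\<le>degree P. act (monom (theta (coeff P j)) j) x) + act P (T x)"
    unfolding theta_op_def by (simp only: act_add act_sum act_pCons0)
  also have "\<dots> = (\<Sum>j\<le>degree P. sc (theta (coeff P j)) ((T ^^ j) x) + sc (coeff P j) ((T ^^ Suc j) x))"
    by (simp only: act_monom) (simp add: act_def funpow_swap1 sum.distrib)
  also have "\<dots> = T (act P x)"
    by (simp add: act_def T_sum T_sc)
  finally show ?thesis .
qed

lemma act_theta_op_pow: "act ((theta_op ^^ i) P) x = (T ^^ i) (act P x)"
  by (induction i) (simp_all add: act_theta_op)

lemma act_op_mult: "act (op_mult P Q) x = act P (act Q x)"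
  unfolding op_mult_def by (simp add: act_sum act_smult act_theta_op_pow) (simp add: act_def)

end

interpretation D: dmod smult theta_op
  by unfold_locales (simp_all add: smult_add_left smult_add_right theta_op_add theta_op_smult)

lemma op_mult_act: "op_mult P Q = D.act P Q"
  by (simp add: op_mult_def D.act_def)

lemma op_mult_assoc: "op_mult (op_mult P Q) R = op_mult P (op_mult Q R)"
  using D.act_op_mult[of P Q R] by (simp only: op_mult_act)

lemma theta_op_op_mult: "theta_op (op_mult P Q) = op_mult (theta_op P) Q"
  by (simp add: op_mult_act D.act_theta_op)

lemma theta_op_pow_one: "(theta_op ^^ i) 1 = monom 1 i"
proof (induction i)
  case 0 then show ?case by (simp add: one_pCons monom_0)
next
  case (Suc i)
  have "theta_op (monom 1 i) = monom 1 (Suc i)"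
    by (rule poly_eqI) (auto simp: coeff_theta_op coeff_monom)
  then show ?case using Suc by simp
qed

lemma op_mult_one_right: "op_mult P 1 = P"
proof -
  have "op_mult P 1 = (\<Sum>i\<le>degree P. monom (coeff P i) i)"
    by (simp add: op_mult_def theta_op_pow_one smult_monom)
  then show ?thesis by (simp add: poly_as_sum_of_monoms)
qed

lemma op_mult_const: "op_mult [:a:] Q = smult a Q"
  by (simp add: op_mult_act D.act_const)

lemma op_mult_monom: "op_mult (monom a k) Q = smult a ((theta_op ^^ k) Q)"
  by (simp add: op_mult_act D.act_monom)

context dmod begin
lemma hom_unique:
  fixes h :: "'k diffop \<Rightarrow> 'm"
  assumes hadd: "\<And>P Q. h (P + Q) = h P + h Q"
    and hsc: "\<And>a P. h (smult a P) = sc a (h P)"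
    and hT: "\<And>P. h (theta_op P) = T (h P)"
  shows "h P = act P (h 1)"
proof -
  have h0: "h 0 = 0" using hadd[of 0 0] by simp
  have hsum: "h (sum f A) = (\<Sum>i\<in>A. h (f i))" for f :: "nat \<Rightarrow> _" and A
    by (induction A rule: infinite_finite_induct) (simp_all add: h0 hadd)
  have hpow: "h ((theta_op ^^ i) Q) = (T ^^ i) (h Q)" for i Q
    by (induction i) (simp_all add: hT)
  have "h P = h (op_mult P 1)" by (simp add: op_mult_one_right)
  also have "\<dots> = act P (h 1)"
    unfolding op_mult_def by (simp add: hsum hsc hpow act_def)
  finally show ?thesis .
qed
end

definition Fsc :: "'k::field_char_0 poly fract \<Rightarrow> ('k diffop \<Rightarrow> 'k poly fract) \<Rightarrow> ('k diffop \<Rightarrow> 'k poly fract)" where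
  "Fsc a g = (\<lambda>Q. a * g Q)"
definition FT :: "('k::field_char_0 diffop \<Rightarrow> 'k poly fract) \<Rightarrow> ('k diffop \<Rightarrow> 'k poly fract)" where
  "FT g = (\<lambda>Q. theta (g Q) - g (theta_op Q))"

interpretation F: dmod Fsc FT
  by unfold_locales (auto simp: Fsc_def FT_def algebra_simps theta_add theta_mult theta_diff)




lemma coeff_theta_pow_high: "degree Q + i < j \<Longrightarrow> coeff ((theta_op ^^ i) Q) j = 0"
proof (induction i arbitrary: j)
  case 0 then show ?case by (simp add: coeff_eq_0)
next
  case (Suc i) then show ?case by (simp add: coeff_theta_op)
qed

lemma coeff_theta_pow_top: "coeff ((theta_op ^^ i) Q) (degree Q + i) = lead_coeff Q"
proof (induction i)
  case 0 then show ?case by simp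
next
  case (Suc i)
  have "coeff ((theta_op ^^ i) Q) (degree Q + Suc i) = 0" by (rule coeff_theta_pow_high) simp
  then show ?case using Suc by (simp add: coeff_theta_op)
qed

lemma coeff_theta_pow_const_top: "coeff ((theta_op ^^ i) [:b:]) i = b"
  using coeff_theta_pow_top[of i "[:b:]"] by simp

lemma coeff_theta_pow_const_high: "i < j \<Longrightarrow> coeff ((theta_op ^^ i) [:b:]) j = 0"
  using coeff_theta_pow_high[of "[:b:]" i j] by simp

lemma coeff_theta_pow_const_sub: "coeff ((theta_op ^^ Suc i) [:b:]) i = of_nat (Suc i) * theta b"
proof (induction i)
  case 0 then show ?case by (simp add: coeff_theta_op)
next
  case (Suc i)
  have "coeff ((theta_op ^^ Suc (Suc i)) [:b:]) (Suc i)
      = theta (coeff ((theta_op ^^ Suc i) [:b:]) (Suc i)) + coeff ((theta_op ^^ Suc i) [:b:]) i"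
    by (simp add: coeff_theta_op)
  also have "\<dots> = theta b + of_nat (Suc i) * theta b"
    using Suc coeff_theta_pow_const_top[of "Suc i" b] by simp
  finally show ?case by (simp add: algebra_simps)
qed

lemma op_mult_zero_left[simp]: "op_mult 0 Q = 0"
  by (simp add: op_mult_def)
lemma op_mult_add_left: "op_mult (P + P') Q = op_mult P Q + op_mult P' Q"
  by (simp add: op_mult_act D.act_add)
lemma op_mult_diff_left: "op_mult (P - P') Q = op_mult P Q - op_mult P' Q"
  by (simp add: op_mult_act D.act_diff)
lemma op_mult_minus_left: "op_mult (- P) Q = - op_mult P Q"
  by (simp add: op_mult_act D.act_minus)
lemma op_mult_smult_left: "op_mult (smult a P) Q = smult a (op_mult P Q)"
  by (simp add: op_mult_act D.act_smult)

locale monicL =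
  fixes L :: "'k::field_char_0 diffop" and n :: nat
  assumes n1: "n \<ge> 1" and degL: "degree L = n" and lcL: "coeff L n = 1"
begin

lemma L_nz: "L \<noteq> 0" using lcL by auto

lemma op_mult_L_high: "degree S + n < j \<Longrightarrow> coeff (op_mult S L) j = 0"
  unfolding op_mult_def by (simp add: coeff_sum coeff_theta_pow_high degL)

lemma op_mult_L_top: "coeff (op_mult S L) (degree S + n) = lead_coeff S"
proof -
  have "coeff (op_mult S L) (degree S + n)
      = (\<Sum>i\<le>degree S. if i = degree S then lead_coeff S else 0)"
    unfolding op_mult_def coeff_sum coeff_smult
  proof (rule sum.cong)
    fix i assume i: "i \<in> {..degree S}"
    show "coeff S i * coeff ((theta_op ^^ i) L) (degree S + n) = (if i = degree S then lead_coeff S else 0)"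
    proof (cases "i = degree S")
      case True then show ?thesis using coeff_theta_pow_top[of i L] by (simp add: degL lcL add.commute)
    next
      case False then have "i < degree S" using i by auto
      then show ?thesis using coeff_theta_pow_high[of L i "degree S + n"] False by (simp add: degL)
    qed
  qed simp
  then show ?thesis by simp
qed

lemma degree_op_mult_L: "S \<noteq> 0 \<Longrightarrow> degree (op_mult S L) = degree S + n"
proof -
  assume "S \<noteq> 0"
  then have "coeff (op_mult S L) (degree S + n) \<noteq> 0" by (simp add: op_mult_L_top)
  moreover have "degree (op_mult S L) \<le> degree S + n"
    by (rule degree_le) (simp add: op_mult_L_high)
  ultimately show ?thesis using le_degree le_antisym by blast
qed

lemma ideal_degree: "in_left_ideal L P \<Longrightarrow> P \<noteq> 0 \<Longrightarrow> n \<le> degree P"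
proof -
  assume "in_left_ideal L P" "P \<noteq> 0"
  then obtain S where S: "P = op_mult S L" unfolding in_left_ideal_def by blast
  with \<open>P \<noteq> 0\<close> have "S \<noteq> 0" by auto
  then show ?thesis using S degree_op_mult_L by simp
qed

lemma rem_exists: "\<exists>S r. Q = op_mult S L + r \<and> degree r < n"
proof (induction "degree Q" arbitrary: Q rule: less_induct)
  case less
  show ?case
  proof (cases "degree Q < n")
    case True then show ?thesis by (intro exI[of _ 0] exI[of _ Q]) simp
  next
    case False
    define d where "d = degree Q"
    define Q' where "Q' = Q - smult (lead_coeff Q) ((theta_op ^^ (d - n)) L)"
    have dn: "n \<le> d" using False d_def by simp
    have hi: "coeff Q' j = 0" if "d \<le> j" for j
    proof (cases "j = d")
      case True
      have "coeff ((theta_op ^^ (d - n)) L) (degree L + (d - n)) = 1"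
        using coeff_theta_pow_top[of "d-n" L] by (simp add: degL lcL)
      then show ?thesis using True dn by (simp add: Q'_def degL d_def)
    next
      case False
      then have "d < j" using that by simp
      then show ?thesis using dn
        by (simp add: Q'_def d_def coeff_eq_0 coeff_theta_pow_high degL)
    qed
    have "degree Q' < d"
    proof (rule ccontr)
      assume "\<not> degree Q' < d"
      then have "d \<le> degree Q'" by simp
      then have "coeff Q' (degree Q') = 0" using hi by simp
      then have "Q' = 0" by simp
      then show False using \<open>d \<le> degree Q'\<close> dn n1 by simp
    qed
    then obtain S r where Sr: "Q' = op_mult S L + r" "degree r < n"
      using less d_def by blast
    have "Q = op_mult (S + monom (lead_coeff Q) (d - n)) L + r"
      using Sr by (simp add: Q'_def op_mult_add_left op_mult_monom algebra_simps)
    then show ?thesis using Sr by blast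
  qed
qed

lemma mcong_refl: "mcong L P P"
  unfolding mcong_def in_left_ideal_def by (intro exI[of _ 0]) simp

lemma mcong_sym: "mcong L P Q \<Longrightarrow> mcong L Q P"
  unfolding mcong_def in_left_ideal_def
  by (metis minus_diff_eq op_mult_minus_left)

lemma mcong_trans: "mcong L P Q \<Longrightarrow> mcong L Q R \<Longrightarrow> mcong L P R"
  unfolding mcong_def in_left_ideal_def
proof -
  assume "\<exists>S. P - Q = op_mult S L" "\<exists>S. Q - R = op_mult S L"
  then obtain S S' where "P - Q = op_mult S L" "Q - R = op_mult S' L" by blast
  then have "P - R = op_mult (S + S') L" by (simp add: op_mult_add_left algebra_simps)
  then show "\<exists>S. P - R = op_mult S L" by blast
qed

lemma mcong_add: "mcong L P P' \<Longrightarrow> mcong L Q Q' \<Longrightarrow> mcong L (P + Q) (P' + Q')"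
  unfolding mcong_def in_left_ideal_def
proof -
  assume "\<exists>S. P - P' = op_mult S L" "\<exists>S. Q - Q' = op_mult S L"
  then obtain S S' where "P - P' = op_mult S L" "Q - Q' = op_mult S' L" by blast
  then have "P + Q - (P' + Q') = op_mult (S + S') L" by (simp add: op_mult_add_left algebra_simps)
  then show "\<exists>S. P + Q - (P' + Q') = op_mult S L" by blast
qed

lemma mcong_smult: "mcong L P P' \<Longrightarrow> mcong L (smult a P) (smult a P')"
  unfolding mcong_def in_left_ideal_def
proof -
  assume "\<exists>S. P - P' = op_mult S L"
  then obtain S where "P - P' = op_mult S L" by blast
  then have "smult a P - smult a P' = op_mult (smult a S) L"
    by (simp add: op_mult_smult_left smult_diff_right[symmetric])
  then show "\<exists>S. smult a P - smult a P' = op_mult S L" by blast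
qed

lemma mcong_ideal: "mcong L (op_mult S L) 0"
  unfolding mcong_def in_left_ideal_def by auto

lemma mcong_unique: "degree r < n \<Longrightarrow> degree r' < n \<Longrightarrow> mcong L r r' \<Longrightarrow> r = r'"
proof (rule ccontr)
  assume a: "degree r < n" "degree r' < n" "mcong L r r'" "r \<noteq> r'"
  have "r - r' \<noteq> 0" using a by simp
  then have "n \<le> degree (r - r')" using ideal_degree a(3) unfolding mcong_def by blast
  moreover have "degree (r - r') < n"
    using a(1,2) degree_diff_le_max[of r r'] by linarith
  ultimately show False by simp
qed

definition rem :: "'k diffop \<Rightarrow> 'k diffop" where
  "rem Q = (SOME r. degree r < n \<and> mcong L Q r)"

lemma rem_spec: "degree (rem Q) < n \<and> mcong L Q (rem Q)"
proof -
  obtain S r where "Q = op_mult S L + r" "degree r < n" using rem_exists by blast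
  then have "degree r < n \<and> mcong L Q r"
    unfolding mcong_def in_left_ideal_def by auto
  then show ?thesis unfolding rem_def by (rule someI)
qed

lemma rem_degree: "degree (rem Q) < n" using rem_spec by blast
lemma rem_mcong: "mcong L Q (rem Q)" using rem_spec by blast

lemma rem_eq: "degree r < n \<Longrightarrow> mcong L Q r \<Longrightarrow> rem Q = r"
  using mcong_unique rem_degree rem_mcong mcong_sym mcong_trans by metis

lemma rem_small: "degree r < n \<Longrightarrow> rem r = r"
  by (rule rem_eq) (simp_all add: mcong_refl)

lemma rem_cong: "mcong L Q Q' \<Longrightarrow> rem Q = rem Q'"
  by (metis mcong_sym mcong_trans rem_degree rem_eq rem_mcong)

lemma rem_add: "rem (P + Q) = rem P + rem Q"
  by (rule rem_eq) (auto intro: mcong_add rem_mcong degree_add_less rem_degree)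

lemma rem_smult: "rem (smult a P) = smult a (rem P)"
  using n1 by (intro rem_eq) (auto intro: mcong_smult rem_mcong le_less_trans[OF degree_smult_le] rem_degree)

lemma rem_ideal: "rem (op_mult S L) = 0"
  using rem_cong[OF mcong_ideal] rem_small[of 0] n1 by simp

definition eps :: "'k diffop \<Rightarrow> 'k poly fract" where
  "eps Q = coeff (rem Q) (n - 1)"

definition good :: "('k diffop \<Rightarrow> 'k poly fract) \<Rightarrow> bool" where
  "good g \<longleftrightarrow> (\<forall>x y. g (x + y) = g x + g y) \<and> (\<forall>a x. g (smult a x) = a * g x)
     \<and> (\<forall>S. g (op_mult S L) = 0)"

lemma good_zero: "good g \<Longrightarrow> g 0 = 0"
  unfolding good_def by (metis op_mult_zero_left)

lemma good_diff: "good g \<Longrightarrow> g (x - y) = g x - g y"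
  unfolding good_def by (metis add_diff_cancel_left' diff_add_cancel eq_diff_eq)

lemma good_cong: "good g \<Longrightarrow> mcong L x y \<Longrightarrow> g x = g y"
  unfolding mcong_def in_left_ideal_def using good_diff[of g x y]
  by (auto simp: good_def)

lemma good_rem: "good g \<Longrightarrow> g x = g (rem x)"
  using good_cong rem_mcong by blast

lemma good_sum: "good g \<Longrightarrow> g (sum f A) = (\<Sum>i\<in>A. g (f i))"
  by (induction A rule: infinite_finite_induct) (simp_all add: good_zero, simp add: good_def)

lemma good_eps: "good eps"
  unfolding good_def eps_def by (simp add: rem_add rem_smult rem_ideal)

lemma good_Fsc: "good g \<Longrightarrow> good (Fsc a g)"
  unfolding good_def Fsc_def by (simp add: algebra_simps)

lemma good_add: "good g \<Longrightarrow> good h \<Longrightarrow> good (g + h)"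
  unfolding good_def by (simp add: algebra_simps)

lemma good_uminus: "good g \<Longrightarrow> good (- g)"
  unfolding good_def by (simp add: algebra_simps)

lemma good_diff_fun: "good g \<Longrightarrow> good h \<Longrightarrow> good (g - h)"
  unfolding good_def by (simp add: algebra_simps)

lemma good_zero_fun: "good 0"
  unfolding good_def by simp

lemma good_FT: "good g \<Longrightarrow> good (FT g)"
  unfolding good_def FT_def
  by (simp add: theta_add theta_mult theta_op_add theta_op_smult theta_op_op_mult algebra_simps)

lemma good_Tpow: "good g \<Longrightarrow> good ((FT ^^ i) g)"
  by (induction i) (simp_all add: good_FT)

lemma good_sum_fun: "(\<And>i. i \<in> A \<Longrightarrow> good (f i)) \<Longrightarrow> good (sum f A)"
  by (induction A rule: infinite_finite_induct) (simp_all add: good_zero_fun good_add)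

lemma good_act: "good g \<Longrightarrow> good (F.act P g)"
  unfolding F.act_def by (intro good_sum_fun good_Fsc good_Tpow)

lemma poly_expand: "degree (r::'k diffop) < n \<Longrightarrow> r = (\<Sum>j<n. smult (coeff r j) (monom 1 j))"
proof (rule poly_eqI)
  fix k assume "degree r < n"
  show "coeff r k = coeff (\<Sum>j<n. smult (coeff r j) (monom 1 j)) k"
  proof (cases "k < n")
    case True
    have "(\<Sum>j<n. coeff r j * (if j = k then 1 else 0)) = (\<Sum>j<n. if j = k then coeff r j else 0)"
      by (rule sum.cong) auto
    then show ?thesis using True by (simp add: coeff_sum coeff_monom)
  next
    case False then show ?thesis using \<open>degree r < n\<close>
      by (auto simp add: coeff_sum coeff_monom coeff_eq_0)
  qed
qed

lemma good_expand: "good g \<Longrightarrow> degree r < n \<Longrightarrow> g r = (\<Sum>j<n. coeff r j * g (monom 1 j))"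
proof -
  assume g: "good g" and r: "degree r < n"
  have "g r = g (\<Sum>j<n. smult (coeff r j) (monom 1 j))" using poly_expand[OF r] by (rule arg_cong)
  also have "\<dots> = (\<Sum>j<n. g (smult (coeff r j) (monom 1 j)))" by (rule good_sum[OF g])
  also have "\<dots> = (\<Sum>j<n. coeff r j * g (monom 1 j))"
    using g unfolding good_def by (intro sum.cong refl) blast
  finally show ?thesis .
qed

end




context monicL begin

lemma theta_op_rem: assumes r: "degree r < n"
  shows "rem (theta_op r) = theta_op r - smult (coeff r (n - 1)) L"
proof (rule rem_eq)
  have "coeff (theta_op r - smult (coeff r (n - 1)) L) j = 0" if j: "n - 1 < j" for j
  proof (cases "j = n")
    case True
    then show ?thesis using r n1 by (simp add: coeff_theta_op coeff_eq_0 lcL)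
  next
    case False
    then have "n < j" using j by simp
    then show ?thesis using r n1 by (simp add: coeff_theta_op coeff_eq_0 degL)
  qed
  then have "degree (theta_op r - smult (coeff r (n - 1)) L) \<le> n - 1" by (intro degree_le) auto
  then show "degree (theta_op r - smult (coeff r (n - 1)) L) < n" using n1 by simp
  show "mcong L (theta_op r) (theta_op r - smult (coeff r (n - 1)) L)"
    unfolding mcong_def in_left_ideal_def
    by (intro exI[of _ "[:coeff r (n - 1):]"]) (simp add: op_mult_const)
qed

fun gseq :: "nat \<Rightarrow> ('k diffop \<Rightarrow> 'k poly fract)" where
  "gseq 0 = eps"
| "gseq (Suc m) = Fsc (coeff L (n - 1 - m)) eps - FT (gseq m)"

lemma good_gseq: "good (gseq m)"
proof (induction m)
  case 0 then show ?case by (simp add: good_eps)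
next
  case (Suc m) then show ?case
    by (simp only: gseq.simps) (intro good_diff_fun good_Fsc good_eps good_FT)
qed

lemma gseq_step:
  assumes m: "m < n" and IH: "\<And>Q. gseq m Q = coeff (rem Q) (n - 1 - m)"
  shows "gseq (Suc m) Q = (if Suc m < n then coeff (rem Q) (n - 1 - Suc m) else 0)"
proof -
  define r where "r = rem Q"
  have rd: "degree r < n" unfolding r_def by (rule rem_degree)
  define k where "k = n - 1 - m"
  have "gseq (Suc m) Q = gseq (Suc m) r" unfolding r_def by (rule good_rem[OF good_gseq])
  also have "\<dots> = coeff L k * eps r - (theta (gseq m r) - gseq m (theta_op r))"
    by (simp add: Fsc_def FT_def k_def)
  also have "\<dots> = coeff L k * coeff r (n - 1) - (theta (coeff r k)
       - (theta (coeff r k) + (if k = 0 then 0 else coeff r (k - 1)) - coeff r (n - 1) * coeff L k))"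
    using rd by (simp add: eps_def rem_small IH theta_op_rem coeff_theta_op k_def)
  also have "\<dots> = (if k = 0 then 0 else coeff r (k - 1))" by (simp add: algebra_simps)
  also have "\<dots> = (if Suc m < n then coeff (rem Q) (n - 1 - Suc m) else 0)"
    using m by (auto simp: k_def r_def)
  finally show ?thesis .
qed

lemma gseq_val: "m < n \<Longrightarrow> gseq m Q = coeff (rem Q) (n - 1 - m)"
proof (induction m arbitrary: Q)
  case 0 then show ?case by (simp add: eps_def)
next
  case (Suc m)
  then show ?case using gseq_step[of m Q] by simp
qed

lemma gseq_n: "gseq n = 0"
proof
  fix Q
  obtain m where m: "n = Suc m" using n1 by (cases n) auto
  have "gseq (Suc m) Q = 0" using gseq_step[of m Q] gseq_val[of m] m by simp
  then show "gseq n Q = 0 Q" using m by simp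
qed

lemma gseq_sum: "m \<le> n \<Longrightarrow>
  gseq m = (\<Sum>i\<le>m. Fsc ((-1) ^ i) ((FT ^^ i) (Fsc (coeff L (n - m + i)) eps)))"
proof (induction m)
  case 0 then show ?case by (simp add: lcL F.sc_one)
next
  case (Suc m)
  then have IH: "gseq m = (\<Sum>i\<le>m. Fsc ((-1) ^ i) ((FT ^^ i) (Fsc (coeff L (n - m + i)) eps)))"
    by simp
  have idx: "n - Suc m + Suc i = n - m + i" for i using Suc.prems by simp
  have "gseq (Suc m) = Fsc (coeff L (n - Suc m)) eps
      - (\<Sum>i\<le>m. Fsc ((-1) ^ i) ((FT ^^ Suc i) (Fsc (coeff L (n - m + i)) eps)))"
  proof -
    have "FT (gseq m) = (\<Sum>i\<le>m. FT (Fsc ((-1) ^ i) ((FT ^^ i) (Fsc (coeff L (n - m + i)) eps))))"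
      by (simp only: IH F.T_sum)
    also have "\<dots> = (\<Sum>i\<le>m. Fsc ((-1) ^ i) ((FT ^^ Suc i) (Fsc (coeff L (n - m + i)) eps)))"
      by (rule sum.cong) (simp_all only: F.T_sc theta_neg1_pow F.sc_zero_left add_0_left funpow.simps o_apply)
    finally show ?thesis by (simp only: gseq.simps diff_diff_left plus_1_eq_Suc)
  qed
  also have "\<dots> = Fsc ((-1) ^ 0) ((FT ^^ 0) (Fsc (coeff L (n - Suc m + 0)) eps))
      + (\<Sum>i\<le>m. Fsc ((-1) ^ Suc i) ((FT ^^ Suc i) (Fsc (coeff L (n - Suc m + Suc i)) eps)))"
  proof -
    have s1: "Fsc ((-1) ^ Suc i) Y = - Fsc ((-1) ^ i) Y" for i and Y :: "'k diffop \<Rightarrow> 'k poly fract"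
      using F.sc_minus_left[of "(-1)^i" Y] by simp
    have "(\<Sum>i\<le>m. Fsc ((-1) ^ Suc i) ((FT ^^ Suc i) (Fsc (coeff L (n - Suc m + Suc i)) eps)))
       = - (\<Sum>i\<le>m. Fsc ((-1) ^ i) ((FT ^^ Suc i) (Fsc (coeff L (n - m + i)) eps)))"
      by (simp only: s1 idx sum_negf)
    then show ?thesis
      by (simp only: power_0 F.sc_one funpow_0 id_apply add_0_right diff_conv_add_uminus)
  qed
  also have "\<dots> = (\<Sum>i\<le>Suc m. Fsc ((-1) ^ i) ((FT ^^ i) (Fsc (coeff L (n - Suc m + i)) eps)))"
    by (subst sum.atMost_Suc_shift) simp
  finally show ?case .
qed

lemma adjoint_eps: "F.act (adjoint L) eps = 0"
proof -
  have "F.act (adjoint L) eps = (\<Sum>i\<le>n. Fsc ((-1) ^ i) ((FT ^^ i) (Fsc (coeff L i) eps)))"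
    unfolding adjoint_def
    by (simp add: degL F.act_sum F.act_smult F.act_op_mult F.act_monom F.act_const F.sc_one)
  also have "\<dots> = gseq n" using gseq_sum[of n] by simp
  finally show ?thesis by (simp add: gseq_n)
qed

end



lemma op_mult_sum_left: "op_mult (sum f A) Q = (\<Sum>i\<in>A. op_mult (f i) Q)"
  by (simp add: op_mult_act D.act_sum)

lemma op_mult_const_const: "op_mult [:a:] [:b:] = [:a * b:]"
  by (simp add: op_mult_const)

context monicL begin

definition Hop :: "'k poly fract \<Rightarrow> 'k diffop" where
  "Hop \<beta> = op_mult (adjoint L) [:\<beta>:]"

lemma Hop_expand: "Hop \<beta> = (\<Sum>i\<le>n. smult ((-1) ^ i) ((theta_op ^^ i) [:coeff L i * \<beta>:]))"
proof -
  have "op_mult (op_mult (monom 1 i) [:coeff L i:]) [:\<beta>:] = (theta_op ^^ i) [:coeff L i * \<beta>:]" for i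
    by (simp only: op_mult_assoc op_mult_const_const) (simp add: op_mult_monom)
  then show ?thesis
    unfolding Hop_def adjoint_def by (simp add: degL op_mult_sum_left op_mult_smult_left)
qed

lemma Hop_high: "n < j \<Longrightarrow> coeff (Hop \<beta>) j = 0"
  by (simp add: Hop_expand coeff_sum coeff_theta_pow_const_high)

lemma Hop_top: "coeff (Hop \<beta>) n = (-1) ^ n * \<beta>"
proof -
  have "coeff (Hop \<beta>) n = (\<Sum>i\<le>n. if i = n then (-1) ^ n * \<beta> else 0)"
    unfolding Hop_expand coeff_sum coeff_smult
    by (rule sum.cong) (auto simp: coeff_theta_pow_const_top coeff_theta_pow_const_high lcL)
  then show ?thesis by simp
qed

lemma Hop_sub: assumes m: "n = Suc m"
  shows "coeff (Hop \<beta>) m = (-1) ^ n * (of_nat n * theta \<beta>) + (-1) ^ m * (coeff L m * \<beta>)"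
proof -
  have "coeff (Hop \<beta>) m = (\<Sum>i<Suc (Suc m). (-1) ^ i * coeff ((theta_op ^^ i) [:coeff L i * \<beta>:]) m)"
    unfolding Hop_expand coeff_sum coeff_smult m by (simp add: lessThan_Suc_atMost)
  also have "\<dots> = (\<Sum>i<m. (-1) ^ i * coeff ((theta_op ^^ i) [:coeff L i * \<beta>:]) m)
      + (-1) ^ m * (coeff L m * \<beta>) + (-1) ^ Suc m * (of_nat (Suc m) * theta \<beta>)"
    using lcL m by (simp add: coeff_theta_pow_const_top coeff_theta_pow_const_sub del: funpow.simps)
  also have "(\<Sum>i<m. (-1) ^ i * coeff ((theta_op ^^ i) [:coeff L i * \<beta>:]) m) = 0"
    by (rule sum.neutral) (simp add: coeff_theta_pow_const_high)
  finally show ?thesis using m by simp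
qed

lemma polar_imp:
  assumes pol: "polarization L B"
  shows "\<exists>\<beta>. beta_factor L \<beta> \<and> self_adjoint_wrt L \<beta>"
proof -
  have wd: "\<And>P P' Q. mcong L P P' \<Longrightarrow> B P Q = B P' Q \<and> B Q P = B Q P'"
    and lin: "\<And>a P P' Q. B (smult a P + P') Q = a * B P Q + B P' Q \<and>
                 B Q (smult a P + P') = a * B Q P + B Q P'"
    and nd: "\<And>P. (\<forall>Q. B P Q = 0) \<Longrightarrow> in_left_ideal L P"
    and hor: "\<And>P Q. theta (B P Q) = B (theta_op P) Q + B P (theta_op Q)"
    and fil: "\<And>i P Q. i < degree L \<Longrightarrow> in_Fil L i P \<Longrightarrow> in_Fil L (degree L - i) Q \<Longrightarrow> B P Q = 0"
    using pol unfolding polarization_def by blast+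
  have B01: "B 0 Q = 0" for Q
  proof -
    have "B (smult 1 0 + 0) Q = 1 * B 0 Q + B 0 Q" using lin[of 1 0 0 Q] by blast
    then have "B 0 Q + B 0 Q = B 0 Q + 0" by simp
    then show ?thesis by (rule add_left_imp_eq)
  qed
  have B02: "B Q 0 = 0" for Q
  proof -
    have "B Q (smult 1 0 + 0) = 1 * B Q 0 + B Q 0" using lin[of 1 0 0 Q] by blast
    then have "B Q 0 + B Q 0 = B Q 0 + 0" by simp
    then show ?thesis by (rule add_left_imp_eq)
  qed
  have add1: "B (P + P') Q = B P Q + B P' Q" for P P' Q using lin[of 1 P P' Q] by simp
  have sm1: "B (smult a P) Q = a * B P Q" for a P Q using lin[of a P 0 Q] by (simp add: B01)
  have add2: "B Q (P + P') = B Q P + B Q P'" for P P' Q using lin[of 1 P P' Q] by simp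
  have sm2: "B Q (smult a P) = a * B Q P" for a P Q using lin[of a P 0 Q] by (simp add: B02)
  have goodB: "good (B Q)" for Q
    unfolding good_def using add2 sm2 wd[OF mcong_ideal] B02 by metis
  define c where "c = B 1 (monom 1 (n - 1))"
  have B1mon: "B 1 (monom 1 j) = 0" if "j < n - 1" for j
  proof (rule fil[of "n - 1"])
    show "n - 1 < degree L" using n1 degL by simp
    show "in_Fil L (n - 1) 1" unfolding in_Fil_def using n1 degL
      by (intro exI[of _ 1]) (auto simp: mcong_refl coeff_1)
    show "in_Fil L (degree L - (n - 1)) (monom 1 j)" unfolding in_Fil_def using n1 degL that
      by (intro exI[of _ "monom 1 j"]) (auto simp: mcong_refl coeff_monom)
  qed
  have B1: "B 1 Q = c * eps Q" for Q
  proof -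
    have "B 1 Q = B 1 (rem Q)" by (rule good_rem[OF goodB])
    also have "\<dots> = (\<Sum>j<n. coeff (rem Q) j * B 1 (monom 1 j))"
      by (rule good_expand[OF goodB rem_degree])
    also have "\<dots> = (\<Sum>j<n. if j = n - 1 then coeff (rem Q) (n - 1) * c else 0)"
      by (rule sum.cong) (auto simp: B1mon c_def)
    also have "\<dots> = c * eps Q" using n1 by (simp add: eps_def)
    finally show ?thesis .
  qed
  have hom: "B P = F.act P (B 1)" for P
  proof (rule F.hom_unique[where h = B])
    show "B (P + Q) = B P + B Q" for P Q by (rule ext) (simp add: add1)
    show "B (smult a P) = Fsc a (B P)" for a P by (rule ext) (simp add: sm1 Fsc_def)
    show "B (theta_op P) = FT (B P)" for P by (rule ext) (simp add: FT_def hor)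
  qed
  have B1f: "B 1 = Fsc c eps" by (rule ext) (simp add: B1 Fsc_def)
  have cnz: "c \<noteq> 0"
  proof
    assume "c = 0"
    then have "\<forall>Q. B 1 Q = 0" by (simp add: B1)
    then have "in_left_ideal L 1" by (rule nd)
    then have "n \<le> degree (1 :: 'k diffop)" by (rule ideal_degree) simp
    then show False using n1 by simp
  qed
  define \<beta> where "\<beta> = inverse c"
  have bnz: "\<beta> \<noteq> 0" using cnz by (simp add: \<beta>_def)
  have bc: "op_mult [:\<beta>:] [:c:] = 1" using cnz by (simp add: op_mult_const_const \<beta>_def one_pCons)
  define H where "H = Hop \<beta>"
  have "B H = F.act H (F.act [:c:] eps)" by (simp add: hom[of H] B1f F.act_const)
  also have "\<dots> = F.act (op_mult (adjoint L) 1) eps"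
    by (simp add: F.act_op_mult[symmetric] H_def Hop_def op_mult_assoc bc)
  also have "\<dots> = 0" by (simp add: op_mult_one_right adjoint_eps)
  finally have "\<forall>Q. B H Q = 0" by simp
  then have "in_left_ideal L H" by (rule nd)
  then obtain S where S: "H = op_mult S L" unfolding in_left_ideal_def by blast
  have Hn: "coeff H n = (-1) ^ n * \<beta>" by (simp add: H_def Hop_top)
  then have Hnz: "H \<noteq> 0" using bnz by auto
  then have Snz: "S \<noteq> 0" using S by auto
  have "degree H \<le> n" by (rule degree_le) (simp add: H_def Hop_high)
  then have "degree S = 0" using degree_op_mult_L[OF Snz] S by simp
  then obtain s where Ss: "S = [:s:]" by (metis degree_eq_zeroE)
  have HL: "H = smult s L" using S Ss by (simp add: op_mult_const)
  have s: "s = (-1) ^ n * \<beta>" using Hn HL lcL by simp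
  obtain m where m: "n = Suc m" using n1 by (cases n) auto
  have "s * coeff L m = (-1) ^ n * (of_nat n * theta \<beta>) + (-1) ^ m * (coeff L m * \<beta>)"
    using Hop_sub[OF m, of \<beta>] HL by (simp add: H_def)
  then have "(-1) ^ n * \<beta> * coeff L m = (-1) ^ n * (of_nat n * theta \<beta>) - (-1) ^ n * (coeff L m * \<beta>)"
    using s m by simp
  then have "(-1) ^ n * (of_nat n * theta \<beta> - 2 * coeff L m * \<beta>) = 0"
    by (simp add: algebra_simps)
  then have bf: "of_nat n * theta \<beta> = 2 * coeff L m * \<beta>" by simp
  have "beta_factor L \<beta>" unfolding beta_factor_def using bnz bf m degL by simp
  moreover have "self_adjoint_wrt L \<beta>"
  proof -
    have "adjoint L = op_mult (adjoint L) (op_mult [:\<beta>:] [:c:])" by (simp add: bc op_mult_one_right)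
    also have "\<dots> = op_mult H [:c:]" by (simp add: H_def Hop_def op_mult_assoc)
    also have "\<dots> = smult s (op_mult L [:c:])" by (simp add: HL op_mult_smult_left)
    also have "\<dots> = smult ((-1) ^ degree L) (op_mult [:\<beta>:] (op_mult L [:inverse \<beta>:]))"
      by (simp add: op_mult_const s degL \<beta>_def)
    finally show ?thesis unfolding self_adjoint_wrt_def .
  qed
  ultimately show ?thesis by blast
qed

end



lemma sum_fun_apply: "(sum f A) x = (\<Sum>i\<in>A. f i x)"
  by (induction A rule: infinite_finite_induct) (simp_all add: plus_fun_def zero_fun_def)

lemma theta_op_monom1: "theta_op (monom 1 k) = monom 1 (Suc k)"
  by (rule poly_eqI) (auto simp: coeff_theta_op coeff_monom)

lemma Fact_apply: "F.act P g Q = (\<Sum>i\<le>degree P. coeff P i * (FT ^^ i) g Q)"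
  by (simp add: F.act_def sum_fun_apply Fsc_def)

lemma Fact_apply_bound: "degree P \<le> N \<Longrightarrow> F.act P g Q = (\<Sum>i\<le>N. coeff P i * (FT ^^ i) g Q)"
  by (simp add: F.act_bound sum_fun_apply Fsc_def)

lemma FT_apply: "FT g Q = theta (g Q) - g (theta_op Q)" by (simp add: FT_def)

context monicL begin

lemma deg_small: "(\<forall>k\<ge>i. coeff q k = 0) \<Longrightarrow> i \<le> n \<Longrightarrow> degree q < n"
proof -
  assume a: "\<forall>k\<ge>i. coeff q k = 0" "i \<le> n"
  show ?thesis
  proof (cases "q = 0")
    case True then show ?thesis using n1 by simp
  next
    case False
    then have "coeff q (degree q) \<noteq> 0" by simp
    then have "degree q < i" using a(1) by (meson not_le)
    then show ?thesis using a(2) by simp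
  qed
qed

lemma imp_polar:
  assumes bf: "beta_factor L \<beta>" and sa: "self_adjoint_wrt L \<beta>"
  shows "polarizable L"
proof -
  have bnz: "\<beta> \<noteq> 0" using bf by (simp add: beta_factor_def)
  define c where "c = inverse \<beta>"
  have cnz: "c \<noteq> 0" using bnz by (simp add: c_def)
  define f where "f = Fsc c eps"
  define B where "B = (\<lambda>P Q. F.act P f Q)"
  have goodf: "good f" unfolding f_def by (intro good_Fsc good_eps)
  have goodB: "good (B P)" for P unfolding B_def by (intro good_act goodf)
  have Lf: "F.act L f = 0"
  proof -
    define e :: "'k poly fract" where "e = (-1) ^ n * \<beta>"
    have enz: "e \<noteq> 0" using bnz by (simp add: e_def)
    have "adjoint L = smult e (op_mult L [:c:])"
      using sa unfolding self_adjoint_wrt_def by (simp add: op_mult_const e_def c_def degL)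
    then have opc: "op_mult L [:c:] = smult (inverse e) (adjoint L)" using enz by simp
    have "F.act L f = F.act L (F.act [:c:] eps)" by (simp add: f_def F.act_const)
    also have "\<dots> = F.act (op_mult L [:c:]) eps" by (simp add: F.act_op_mult)
    also have "\<dots> = F.act (smult (inverse e) (adjoint L)) eps" by (simp only: opc)
    also have "\<dots> = 0" by (simp add: F.act_smult adjoint_eps)
    finally show ?thesis .
  qed
  have Gval: "(FT ^^ j) f (monom 1 k) = (if j + k = n - 1 then (-1) ^ j * c else 0)"
    if "j + k \<le> n - 1" for j k
    using that
  proof (induction j arbitrary: k)
    case 0
    then have "degree (monom (1::'k poly fract) k) < n" using n1 by (simp add: degree_monom_eq)
    then show ?case by (simp add: f_def Fsc_def eps_def rem_small coeff_monom)
  next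
    case (Suc j)
    have a: "(FT ^^ j) f (monom 1 k) = 0" using Suc.IH[of k] Suc.prems by simp
    have b: "(FT ^^ j) f (monom 1 (Suc k)) = (if j + Suc k = n - 1 then (-1) ^ j * c else 0)"
      using Suc.IH[of "Suc k"] Suc.prems by simp
    have "(FT ^^ Suc j) f (monom 1 k) = theta ((FT ^^ j) f (monom 1 k)) - (FT ^^ j) f (monom 1 (Suc k))"
      by (simp only: funpow.simps o_apply FT_apply theta_op_monom1)
    then show ?case using a b Suc.prems by simp
  qed
  have wd1: "B P Q = B P' Q" if mc: "mcong L P P'" for P P' Q
  proof -
    obtain S where S: "P - P' = op_mult S L" using mc unfolding mcong_def in_left_ideal_def by blast
    have "F.act P f = F.act P' f + F.act (P - P') f" by (simp add: F.act_diff)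
    also have "F.act (P - P') f = 0" by (simp add: S F.act_op_mult Lf)
    finally show ?thesis by (simp add: B_def)
  qed
  have wd2: "B Q P = B Q P'" if "mcong L P P'" for P P' Q
    using good_cong[OF goodB that] .
  have add1: "B (P + P') Q = B P Q + B P' Q" for P P' Q by (simp add: B_def F.act_add)
  have sm1: "B (smult a P) Q = a * B P Q" for a P Q by (simp add: B_def F.act_smult Fsc_def)
  have add2: "B Q (P + P') = B Q P + B Q P'" for P P' Q using goodB unfolding good_def by blast
  have sm2: "B Q (smult a P) = a * B Q P" for a P Q using goodB unfolding good_def by blast
  have horT: "B (theta_op P) Q = theta (B P Q) - B P (theta_op Q)" for P Q
    by (simp add: B_def F.act_theta_op FT_def)
  define s :: "'k poly fract" where "s = (-1) ^ (n + 1)"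
  have ss: "s * s = 1" by (simp add: s_def power_add[symmetric])
  have Bmon: "B P Q = (\<Sum>i\<le>degree P. coeff P i * (FT ^^ i) f Q)" for P Q
    by (simp add: B_def Fact_apply)
  have BQ1: "B Q 1 = (-1) ^ (n - 1) * c * eps Q" for Q
  proof -
    define r where "r = rem Q"
    have rd: "degree r < n" unfolding r_def by (rule rem_degree)
    have "B Q 1 = B r 1" unfolding r_def by (rule wd1[OF rem_mcong])
    also have "\<dots> = (\<Sum>i\<le>n - 1. coeff r i * (FT ^^ i) f (monom 1 0))"
      using rd by (simp add: B_def Fact_apply_bound monom_0 one_pCons del: monom_eq_1_iff monom_eq_1)
    also have "\<dots> = (\<Sum>i\<le>n - 1. if i = n - 1 then coeff r (n - 1) * ((-1) ^ (n - 1) * c) else 0)"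
    proof (rule sum.cong)
      fix i assume "i \<in> {..n - 1}"
      then show "coeff r i * (FT ^^ i) f (monom 1 0) = (if i = n - 1 then coeff r (n - 1) * ((-1) ^ (n - 1) * c) else 0)"
        using Gval[of i 0] by simp
    qed simp
    also have "\<dots> = (-1) ^ (n - 1) * c * eps Q" by (simp add: eps_def r_def)
    finally show ?thesis .
  qed
  have hP: "(\<lambda>Q. s * B Q P) = F.act P f" for P
  proof -
    have "(\<lambda>Q. s * B Q P) = F.act P ((\<lambda>P Q. s * B Q P) 1)"
    proof (rule F.hom_unique[where h = "\<lambda>P Q. s * B Q P"])
      show "(\<lambda>Q. s * B Q (P + P')) = (\<lambda>Q. s * B Q P) + (\<lambda>Q. s * B Q P')" for P P'
        by (rule ext) (simp add: add2 algebra_simps)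
      show "(\<lambda>Q. s * B Q (smult a P)) = Fsc a (\<lambda>Q. s * B Q P)" for a P
        by (rule ext) (simp add: sm2 Fsc_def)
      show "(\<lambda>Q. s * B Q (theta_op P)) = FT (\<lambda>Q. s * B Q P)" for P
        by (rule ext) (simp add: FT_def horT theta_mult theta_minus s_def algebra_simps)
    qed
    also have "(\<lambda>P Q. s * B Q P) 1 = f"
    proof
      fix Q
      obtain m where m: "n = Suc m" using n1 by (cases n) auto
      have "s * (-1) ^ (n - 1) = (1 :: 'k poly fract)"
        using m by (simp add: s_def power_add[symmetric])
      then have "s * B Q 1 = c * eps Q" using BQ1[of Q]
        by (metis (no_types, lifting) mult.assoc mult_1)
      then show "(\<lambda>P Q. s * B Q P) 1 Q = f Q" by (simp add: f_def Fsc_def)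
    qed
    finally show ?thesis .
  qed
  have sym: "B Q P = s * B P Q" for P Q
  proof -
    have "s * B Q P = B P Q" using fun_cong[OF hP[of P], of Q] by (simp add: B_def)
    then have "s * (s * B Q P) = s * B P Q" by simp
    then show ?thesis using ss by (simp add: mult.assoc[symmetric])
  qed
  have nd: "in_left_ideal L P" if z: "\<forall>Q. B P Q = 0" for P
  proof (cases "rem P = 0")
    case True
    then have "mcong L P 0" using rem_mcong[of P] by simp
    then show ?thesis by (simp add: mcong_def)
  next
    case False
    define r where "r = rem P"
    define d where "d = degree r"
    have rd: "d < n" unfolding d_def r_def by (rule rem_degree)
    have "B r (monom 1 (n - 1 - d)) = 0" using z wd1[OF rem_mcong[of P]] by (simp add: r_def)
    moreover have "B r (monom 1 (n - 1 - d)) = (\<Sum>i\<le>d. if i = d then coeff r d * ((-1) ^ d * c) else 0)"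
      unfolding Bmon d_def[symmetric] using rd by (intro sum.cong) (auto simp: Gval)
    ultimately have "coeff r d * ((-1) ^ d * c) = 0" by simp
    moreover have "coeff r d \<noteq> 0" using False by (simp add: d_def r_def)
    ultimately show ?thesis using cnz by simp
  qed
  have fil: "B P Q = 0" if i: "i < n" and FP: "in_Fil L i P" and FQ: "in_Fil L (n - i) Q" for i P Q
  proof -
    obtain P' where P': "mcong L P P'" "\<forall>j. n - i \<le> j \<longrightarrow> coeff P' j = 0"
      using FP degL unfolding in_Fil_def by auto
    obtain Q' where Q': "mcong L Q Q'" "\<forall>j. i \<le> j \<longrightarrow> coeff Q' j = 0"
      using FQ degL i unfolding in_Fil_def by auto
    have Qd: "degree Q' < n" using Q'(2) i by (intro deg_small) auto
    have "B P Q = B P' Q'" using wd1[OF P'(1)] wd2[OF Q'(1)] by simp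
    also have "\<dots> = (\<Sum>j\<le>degree P'. coeff P' j * (FT ^^ j) f Q')" by (rule Bmon)
    also have "\<dots> = 0"
    proof (rule sum.neutral, intro ballI)
      fix j assume "j \<in> {..degree P'}"
      show "coeff P' j * (FT ^^ j) f Q' = 0"
      proof (cases "j < n - i")
        case False then show ?thesis using P'(2) by simp
      next
        case True
        have "(FT ^^ j) f Q' = (\<Sum>k<n. coeff Q' k * (FT ^^ j) f (monom 1 k))"
          by (rule good_expand[OF good_Tpow[OF goodf] Qd])
        also have "\<dots> = 0"
        proof (rule sum.neutral, intro ballI)
          fix k assume "k \<in> {..<n}"
          show "coeff Q' k * (FT ^^ j) f (monom 1 k) = 0"
          proof (cases "k < i")
            case False then show ?thesis using Q'(2) by simp
          next
            case True then show ?thesis using \<open>j < n - i\<close> by (simp add: Gval)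
          qed
        qed
        finally show ?thesis by simp
      qed
    qed
    finally show ?thesis .
  qed
  have "polarization L B"
    unfolding polarization_def
  proof (intro conjI allI impI)
    show "B P Q = B P' Q" if "mcong L P P'" for P P' Q using wd1[OF that] .
    show "B Q P = B Q P'" if "mcong L P P'" for P P' Q using wd2[OF that] .
    show "B (smult a P + P') Q = a * B P Q + B P' Q" for a P P' Q by (simp add: add1 sm1)
    show "B Q (smult a P + P') = a * B Q P + B Q P'" for a P P' Q by (simp add: add2 sm2)
    show "B Q P = (-1) ^ (degree L + 1) * B P Q" for P Q using sym[of Q P] by (simp add: s_def degL)
    show "in_left_ideal L P" if "\<forall>Q. B P Q = 0" for P using nd that by blast
    show "theta (B P Q) = B (theta_op P) Q + B P (theta_op Q)" for P Q by (simp add: horT)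
    show "B P Q = 0" if "i < degree L" "in_Fil L i P" "in_Fil L (degree L - i) Q" for i P Q
      using fil that degL by simp
  qed
  then show ?thesis unfolding polarizable_def by blast
qed

end

theorem theorem1p2:
  fixes L :: "'k::field_char_0 poly fract poly" and n :: nat
  assumes "n \<ge> 1" and "degree L = n" and "coeff L n = 1"
  shows "(\<exists>\<beta>. beta_factor L \<beta> \<and> self_adjoint_wrt L \<beta>) \<longleftrightarrow> polarizable L"
proof -
  interpret M: monicL L n using assms by unfold_locales
  show ?thesis
    using M.imp_polar M.polar_imp unfolding polarizable_def by blast
qed

end
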